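(* Let $B$ be a commutative ring with identity and $A$ a dense subring of $B$. If $P,Q$ are prime ideals of $B$ with $P\cap A\subseteq Q\cap A$, then $P\subseteq Q$.
   Context: All rings are commutative with identity; subrings contain the identity. A subring $A$ of $B$ is dense in $B$ if for every ideal $I$ of $B$ and every $b\in B\setminus \operatorname{rad}(I)$ there exists $a\in B\setminus\operatorname{rad}(I)$ with $ab\in A$. *)

theory Defs
  imports "HOL-Algebra.Algebra"
begin

definition ideal_radical :: "('a, 'b) ring_scheme \<Rightarrow> 'a set \<Rightarrow> 'a set" where
  "ideal_radical R I = {x \<in> carrier R. \<exists>n::nat. x [^]\<^bsub>R\<^esub> n \<in> I}"

text \<open>Density of a subset A in the ring B (paper's definition; the subring
  property is assumed separately).\<close>
definition dense_in :: "'a set \<Rightarrow> ('a, 'b) ring_scheme \<Rightarrow> bool" where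
  "dense_in A B \<longleftrightarrow>
     (\<forall>I. ideal I B \<longrightarrow>
        (\<forall>b \<in> carrier B - ideal_radical B I.
           \<exists>a \<in> carrier B - ideal_radical B I. a \<otimes>\<^bsub>B\<^esub> b \<in> A))"

end

theory Submission
  imports Defs
begin

lemma prime_pow_notin:
  assumes "primeideal Q R" "x \<in> carrier R" "x \<notin> Q"
  shows "x [^]\<^bsub>R\<^esub> (n::nat) \<notin> Q"
proof (induction n)
  case 0
  have "\<one>\<^bsub>R\<^esub> \<notin> Q"
    using primeideal.I_notcarr[OF assms(1)] ideal.one_imp_carrier[OF primeideal.axioms(1)[OF assms(1)]]
    by blast
  then show ?case
    using assms by (simp add: primeideal_def cring_def ring_def)
next
  case (Suc n)
  have r: "ring R" using assms(1) by (simp add: primeideal_def cring_def)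
  have c: "x [^]\<^bsub>R\<^esub> n \<in> carrier R"
    using monoid.nat_pow_closed[OF ring.is_monoid[OF r] assms(2)] .
  have "x [^]\<^bsub>R\<^esub> Suc n = x [^]\<^bsub>R\<^esub> n \<otimes>\<^bsub>R\<^esub> x"
    by (simp add: monoid.nat_pow_Suc[OF ring.is_monoid[OF r]])
  then show ?case
    using primeideal.I_prime[OF assms(1) c assms(2)] Suc assms(3) by auto
qed

theorem lemma3p5:
  fixes B (structure) and A P Q :: "'a set"
  assumes "cring B"
    and "subring A B"
    and "dense_in A B"
    and "primeideal P B"
    and "primeideal Q B"
    and "P \<inter> A \<subseteq> Q \<inter> A"
  shows "P \<subseteq> Q"
proof
  fix b assume bP: "b \<in> P"
  show "b \<in> Q"
  proof (rule ccontr)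
    assume bQ: "b \<notin> Q"
    have idP: "ideal P B" and idQ: "ideal Q B"
      using assms(4,5) primeideal.axioms(1) by blast+
    have bc: "b \<in> carrier B" using bP ideal.Icarr[OF idP] by blast
    have "b \<notin> ideal_radical B Q"
      using prime_pow_notin[OF assms(5) bc bQ] by (auto simp: ideal_radical_def)
    then obtain a where a: "a \<in> carrier B - ideal_radical B Q" "a \<otimes> b \<in> A"
      using assms(3) idQ bc unfolding dense_in_def by blast
    have ac: "a \<in> carrier B" using a by blast
    have "a \<notin> Q"
    proof
      assume "a \<in> Q"
      moreover have "a [^] (1::nat) = a"
        using ac assms(1) by (simp add: cring_def ring_def)
      ultimately have "a \<in> ideal_radical B Q" using ac unfolding ideal_radical_def
        by (metis (mono_tags, lifting) mem_Collect_eq)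
      thus False using a by blast
    qed
    have "a \<otimes> b \<in> P" using ideal.I_l_closed[OF idP bP ac] .
    hence "a \<otimes> b \<in> Q" using a assms(6) by blast
    thus False using primeideal.I_prime[OF assms(5) ac bc] bQ \<open>a \<notin> Q\<close> by blast
  qed
qed

end
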